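(* For every $k\ge 1$ and every collection $\Omega$ of functions, $$\rho_1\bigl(\mathsf{vwl}_k^{(\infty)}\bigr)=\rho_1\bigl(\mathsf{TL}_{k+1}(\Omega)\bigr).$$
   Context: Fix integers $n\ge 1$ and $\ell\ge 1$. A graph is a triple $G=(V_G,E_G,\mathrm{col}_G)$ with $V_G=[n]=\{1,\dots,n\}$, $E_G$ a set of unordered pairs of distinct vertices (undirected, no loops), and a vertex labelling $\mathrm{col}_G:V_G\to\mathbb R^\ell$; $N_G(v)=\{u:uv\in E_G\}$. Let $\mathcal G=\mathcal G_0$ be the set of all such graphs and, for $s\ge 1$, $\mathcal G_s=\{(G,\mathbf v):G\in\mathcal G,\ \mathbf v\in V_G^s\}$. Tensor language $\mathsf{TL}(\Omega)$: let $\Omega$ be a collection of functions, each of the form $f:\mathbb R^p\to\mathbb R$ for some $p\ge1$ depending on $f$. Expressions are generated by $\varphi::=\mathbf 1_{x=y}\mid \mathbf 1_{x\neq y}\mid E(x,y)\mid P_s(x)\mid \varphi\cdot\varphi\mid \varphi+\varphi\mid a\cdot\varphi\mid f(\varphi_1,\dots,\varphi_p)\mid \sum_x\varphi$, with $x,y$ index variables, $s\in[\ell]$, $a\in\mathbb R$, $f\in\Omega$ of arity $p$. Free variables: $\mathrm{free}(\mathbf 1_{x\,\mathrm{op}\,y})=\mathrm{free}(E(x,y))=\{x,y\}$, $\mathrm{free}(P_s(x))=\{x\}$; for $\varphi_1\cdot\varphi_2$, $\varphi_1+\varphi_2$, $f(\varphi_1,\dots,\varphi_p)$ the union of the components' free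 variables; $\mathrm{free}(a\cdot\varphi)=\mathrm{free}(\varphi)$; $\mathrm{free}(\sum_x\varphi)=\mathrm{free}(\varphi)\setminus\{x\}$. Semantics: for a graph $G$ and a valuation $\nu$ mapping variables to $V_G$: $[\![E(x,y)]\!]^\nu_G=1$ if $\nu(x)\nu(y)\in E_G$ and $0$ otherwise; $[\![P_s(x)]\!]^\nu_G=\mathrm{col}_G(\nu(x))_s$; $[\![\mathbf 1_{x\,\mathrm{op}\,y}]\!]^\nu_G=1$ if $\nu(x)\,\mathrm{op}\,\nu(y)$ and $0$ otherwise; $\cdot$, $+$, scalar multiplication and $f$ act on the values of the components; $[\![\sum_x\varphi]\!]^\nu_G=\sum_{v\in V_G}[\![\varphi]\!]^{\nu[x\mapsto v]}_G$. For $\varphi$ with free variables among $x_1,\dots,x_s$ and $\mathbf v\in V_G^s$, $[\![\varphi]\!]^{\mathbf v}_G$ denotes the value under $x_i\mapsto v_i$. Summation depth $\mathrm{sd}$: $0$ for atoms, maximum over the components for $\cdot$, $+$, $f(\dots)$, $\mathrm{sd}(a\cdot\varphi)=\mathrm{sd}(\varphi)$, $\mathrm{sd}(\sum_x\varphi)=\mathrm{sd}(\varphi)+1$. $\mathsf{TL}_k(\Omega)$ is the set of expressions in which only variables from $\{x_1,\dots,x_k\}$ occur (free or bound; variables may be re-bound), and $\mathsf{TL}_k^{(t)}(\Omega)$ its subset of summation depth at most $t$. Separation power: for a set $\mathcal F$ of functions $f:\mathcal G_s\to\mathbb R^{m_f}$, $\rho_s(\mathcal F)=\{((G,\mathbf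 v),(H,\mathbf w))\in\mathcal G_s\times\mathcal G_s: f(G,\mathbf v)=f(H,\mathbf w)\ \forall f\in\mathcal F\}$ (for $s=0$, pairs of graphs), and $\rho_s(f)=\rho_s(\{f\})$. For a set $\mathcal L$ of expressions, $\rho_s(\mathcal L)$ is the set of pairs with $[\![\varphi]\!]^{\mathbf v}_G=[\![\varphi]\!]^{\mathbf w}_H$ for all $\varphi\in\mathcal L$ whose free variables are among $x_1,\dots,x_s$ (for $s=0$: all closed expressions in $\mathcal L$). $k$-dimensional Weisfeiler–Leman ($k\ge1$): for $\mathbf v\in V_G^k$, the atomic type $\mathsf{atp}_k(G,\mathbf v)$ records, for all $1\le i<j\le k$, whether $v_i=v_j$ and whether $v_iv_j\in E_G$, together with $\mathrm{col}_G(v_i)$ for all $i\in[k]$. Set $\mathsf{wl}_k^{(0)}(G,\mathbf v)=\mathsf{atp}_k(G,\mathbf v)$ and $\mathsf{wl}_k^{(t+1)}(G,\mathbf v)=\bigl(\mathsf{wl}_k^{(t)}(G,\mathbf v),\{\!\{(\mathsf{atp}_{k+1}(G,(v_1,\dots,v_k,u)),\mathsf{wl}_k^{(t)}(G,\mathbf v[u/1]),\dots,\mathsf{wl}_k^{(t)}(G,\mathbf v[u/k])):u\in V_G\}\!\}\bigr)$, where $\mathbf v[u/i]$ replaces the $i$-th entry of $\mathbf v$ by $u$ and $\{\!\{\cdot\}\!\}$ denotes a multiset. Labels are compared as formal objects across graphs. $\mathsf{vwl}_k^{(t)}(G,v)=\mathsf{wl}_k^{(t)}(G,(v,\dots,v))$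 and $\mathsf{gwl}_k^{(t)}(G)=\{\!\{\mathsf{wl}_k^{(t)}(G,\mathbf v):\mathbf v\in V_G^k\}\!\}$. $\rho_1(\mathsf{vwl}_k^{(t)})$ is the set of pairs $((G,v),(H,w))$ with $\mathsf{vwl}_k^{(t)}(G,v)=\mathsf{vwl}_k^{(t)}(H,w)$, and $\rho_1(\mathsf{vwl}_k^{(\infty)})=\bigcap_{t\ge0}\rho_1(\mathsf{vwl}_k^{(t)})$ (the stable labelling). *)

theory Defs
  imports Complex_Main "HOL-Library.Multiset"
begin

text \<open>Values outside the intended domains are
  fixed canonically (False / 0), so that every mathematical graph has exactly one
  representation.\<close>

record graph =
  gE   :: "nat \<Rightarrow> nat \<Rightarrow> bool"
  gcol :: "nat \<Rightarrow> nat \<Rightarrow> real"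

definition is_graph :: "nat \<Rightarrow> nat \<Rightarrow> graph \<Rightarrow> bool" where
  "is_graph n l G \<longleftrightarrow>
     (\<forall>u v. gE G u v \<longrightarrow> u \<in> {1..n} \<and> v \<in> {1..n} \<and> u \<noteq> v \<and> gE G v u) \<and>
     (\<forall>v s. gcol G v s \<noteq> 0 \<longrightarrow> v \<in> {1..n} \<and> s \<in> {1..l})"

text \<open>Index variables x_i are represented by natural numbers i. A function symbol is
  a pair (p, f) with f applied to a real list of length p (i.e. f : R^p \<rightarrow> R).\<close>

datatype tl =
    EqI nat nat
  | NeqI nat nat
  | Edge nat nat
  | Lab nat nat          (* Lab s x  =  P_s(x) *)
  | Mul tl tl
  | Add tl tl
  | Smul real tl
  | App "nat \<times> (real list \<Rightarrow> real)" "tl list"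
  | Sum nat tl

fun free :: "tl \<Rightarrow> nat set" where
  "free (EqI x y) = {x, y}"
| "free (NeqI x y) = {x, y}"
| "free (Edge x y) = {x, y}"
| "free (Lab s x) = {x}"
| "free (Mul a b) = free a \<union> free b"
| "free (Add a b) = free a \<union> free b"
| "free (Smul c a) = free a"
| "free (App f as) = (\<Union>a\<in>set as. free a)"
| "free (Sum x a) = free a - {x}"

fun vars :: "tl \<Rightarrow> nat set" where
  "vars (EqI x y) = {x, y}"
| "vars (NeqI x y) = {x, y}"
| "vars (Edge x y) = {x, y}"
| "vars (Lab s x) = {x}"
| "vars (Mul a b) = vars a \<union> vars b"
| "vars (Add a b) = vars a \<union> vars b"
| "vars (Smul c a) = vars a"
| "vars (App f as) = (\<Union>a\<in>set as. vars a)"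
| "vars (Sum x a) = insert x (vars a)"

fun wf_tl :: "nat \<Rightarrow> (nat \<times> (real list \<Rightarrow> real)) set \<Rightarrow> tl \<Rightarrow> bool" where
  "wf_tl l \<Omega> (EqI x y) = True"
| "wf_tl l \<Omega> (NeqI x y) = True"
| "wf_tl l \<Omega> (Edge x y) = True"
| "wf_tl l \<Omega> (Lab s x) = (s \<in> {1..l})"
| "wf_tl l \<Omega> (Mul a b) = (wf_tl l \<Omega> a \<and> wf_tl l \<Omega> b)"
| "wf_tl l \<Omega> (Add a b) = (wf_tl l \<Omega> a \<and> wf_tl l \<Omega> b)"
| "wf_tl l \<Omega> (Smul c a) = wf_tl l \<Omega> a"
| "wf_tl l \<Omega> (App f as) = (f \<in> \<Omega> \<and> fst f = length as \<and> (\<forall>a\<in>set as. wf_tl l \<Omega> a))"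
| "wf_tl l \<Omega> (Sum x a) = wf_tl l \<Omega> a"

fun eval :: "nat \<Rightarrow> graph \<Rightarrow> (nat \<Rightarrow> nat) \<Rightarrow> tl \<Rightarrow> real" where
  "eval n G \<nu> (EqI x y) = (if \<nu> x = \<nu> y then 1 else 0)"
| "eval n G \<nu> (NeqI x y) = (if \<nu> x \<noteq> \<nu> y then 1 else 0)"
| "eval n G \<nu> (Edge x y) = (if gE G (\<nu> x) (\<nu> y) then 1 else 0)"
| "eval n G \<nu> (Lab s x) = gcol G (\<nu> x) s"
| "eval n G \<nu> (Mul a b) = eval n G \<nu> a * eval n G \<nu> b"
| "eval n G \<nu> (Add a b) = eval n G \<nu> a + eval n G \<nu> b"
| "eval n G \<nu> (Smul c a) = c * eval n G \<nu> a"
| "eval n G \<nu> (App f as) = snd f (map (eval n G \<nu>) as)"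
| "eval n G \<nu> (Sum x a) = (\<Sum>v\<in>{1..n}. eval n G (\<nu>(x := v)) a)"

definition TL :: "nat \<Rightarrow> (nat \<times> (real list \<Rightarrow> real)) set \<Rightarrow> nat \<Rightarrow> tl set" where
  "TL l \<Omega> k = {\<phi>. wf_tl l \<Omega> \<phi> \<and> vars \<phi> \<subseteq> {1..k}}"

text \<open>Variables other than x_1 are not free and
  hence irrelevant; they are mapped to the same vertex.\<close>
definition rho1_TL :: "nat \<Rightarrow> nat \<Rightarrow> tl set \<Rightarrow> ((graph \<times> nat) \<times> (graph \<times> nat)) set" where
  "rho1_TL n l L = {((G, v), (H, w)).
      is_graph n l G \<and> is_graph n l H \<and> v \<in> {1..n} \<and> w \<in> {1..n} \<and>
      (\<forall>\<phi>\<in>L. free \<phi> \<subseteq> {1} \<longrightarrow> eval n G (\<lambda>_. v) \<phi> = eval n H (\<lambda>_. w) \<phi>)}"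

type_synonym atype = "(bool \<times> bool) list \<times> real list list"

definition atp :: "nat \<Rightarrow> graph \<Rightarrow> nat list \<Rightarrow> atype" where
  "atp l G vs =
     ([(vs ! i = vs ! j, gE G (vs ! i) (vs ! j)). i \<leftarrow> [0..<length vs], j \<leftarrow> [Suc i..<length vs]],
      map (\<lambda>v. map (gcol G v) [1..<Suc l]) vs)"

datatype wlab = Atp atype | Refine wlab "(atype \<times> wlab list) multiset"

fun wl :: "nat \<Rightarrow> nat \<Rightarrow> graph \<Rightarrow> nat \<Rightarrow> nat list \<Rightarrow> wlab" where
  "wl n l G 0 vs = Atp (atp l G vs)"
| "wl n l G (Suc t) vs =
     Refine (wl n l G t vs)
       (image_mset (\<lambda>u. (atp l G (vs @ [u]), map (\<lambda>i. wl n l G t (vs[i := u])) [0..<length vs]))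
          (mset_set {1..n}))"

definition vwl :: "nat \<Rightarrow> nat \<Rightarrow> nat \<Rightarrow> nat \<Rightarrow> graph \<Rightarrow> nat \<Rightarrow> wlab" where
  "vwl n l k t G v = wl n l G t (replicate k v)"

definition rho1_vwl_inf :: "nat \<Rightarrow> nat \<Rightarrow> nat \<Rightarrow> ((graph \<times> nat) \<times> (graph \<times> nat)) set" where
  "rho1_vwl_inf n l k = {((G, v), (H, w)).
      is_graph n l G \<and> is_graph n l H \<and> v \<in> {1..n} \<and> w \<in> {1..n} \<and>
      (\<forall>t. vwl n l k t G v = vwl n l k t H w)}"

end

theory Submission
  imports Defs
begin


lemma concat_map_eq_elem:
  "concat (map f xs) = concat (map g xs) \<Longrightarrow> (\<forall>x\<in>set xs. length (f x) = length (g x))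
   \<Longrightarrow> x \<in> set xs \<Longrightarrow> f x = g x"
proof (induction xs)
  case Nil thus ?case by simp
next
  case (Cons a xs)
  from Cons.prems(1,2) have "f a = g a" "concat (map f xs) = concat (map g xs)"
    by (auto simp: append_eq_append_conv)
  thus ?case using Cons by auto
qed

lemma is_graph_irrefl: "is_graph n l G \<Longrightarrow> \<not> gE G a a"
  by (auto simp: is_graph_def)
lemma is_graph_sym: "is_graph n l G \<Longrightarrow> gE G a b \<Longrightarrow> gE G b a"
  by (auto simp: is_graph_def)

definition Qrel :: "nat \<Rightarrow> graph \<Rightarrow> nat list \<Rightarrow> graph \<Rightarrow> nat list \<Rightarrow> bool" where
  "Qrel l G vs H ws \<longleftrightarrow> length vs = length ws \<and>
     (\<forall>i<length vs. \<forall>j<length vs. (vs!i = vs!j \<longleftrightarrow> ws!i = ws!j) \<and>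
         (gE G (vs!i) (vs!j) \<longleftrightarrow> gE H (ws!i) (ws!j))) \<and>
     map (\<lambda>v. map (gcol G v) [1..<Suc l]) vs = map (\<lambda>v. map (gcol H v) [1..<Suc l]) ws"

lemma QrelD:
  assumes "Qrel l G vs H ws"
  shows "length vs = length ws"
    "\<And>i j. i<length vs \<Longrightarrow> j<length vs \<Longrightarrow> (vs!i = vs!j \<longleftrightarrow> ws!i = ws!j)"
    "\<And>i j. i<length vs \<Longrightarrow> j<length vs \<Longrightarrow> (gE G (vs!i) (vs!j) \<longleftrightarrow> gE H (ws!i) (ws!j))"
    "map (\<lambda>v. map (gcol G v) [1..<Suc l]) vs = map (\<lambda>v. map (gcol H v) [1..<Suc l]) ws"
  using assms unfolding Qrel_def by blast+

lemma atp_eq_iff: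
  assumes G: "is_graph n l G" and H: "is_graph n l H" and len: "length vs = length ws"
  shows "atp l G vs = atp l H ws \<longleftrightarrow> Qrel l G vs H ws"
proof
  assume Q: "Qrel l G vs H ws"
  have "concat (map (\<lambda>i. map (\<lambda>j. (vs ! i = vs ! j, gE G (vs ! i) (vs ! j))) [Suc i..<length vs]) [0..<length vs])
      = concat (map (\<lambda>i. map (\<lambda>j. (ws ! i = ws ! j, gE H (ws ! i) (ws ! j))) [Suc i..<length ws]) [0..<length ws])"
  proof -
    have inner: "map (\<lambda>j. (vs ! i = vs ! j, gE G (vs ! i) (vs ! j))) [Suc i..<length vs]
        = map (\<lambda>j. (ws ! i = ws ! j, gE H (ws ! i) (ws ! j))) [Suc i..<length ws]" if "i < length vs" for i
    proof -
      have "\<forall>j\<in>set [Suc i..<length vs]. (vs ! i = vs ! j, gE G (vs ! i) (vs ! j)) = (ws ! i = ws ! j, gE H (ws ! i) (ws ! j))"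
        using QrelD(2,3)[OF Q] that by simp
      thus ?thesis using len by (simp only: map_eq_conv)
    qed
    have "map (\<lambda>i. map (\<lambda>j. (vs ! i = vs ! j, gE G (vs ! i) (vs ! j))) [Suc i..<length vs]) [0..<length vs]
      = map (\<lambda>i. map (\<lambda>j. (ws ! i = ws ! j, gE H (ws ! i) (ws ! j))) [Suc i..<length ws]) [0..<length ws]"
      using len inner by (simp only: map_eq_conv) simp
    thus ?thesis by simp
  qed
  thus "atp l G vs = atp l H ws" using QrelD(4)[OF Q] unfolding atp_def by simp
next
  assume eq: "atp l G vs = atp l H ws"
  let ?m = "length vs"
  have c: "concat (map (\<lambda>i. map (\<lambda>j. (vs ! i = vs ! j, gE G (vs ! i) (vs ! j))) [Suc i..<?m]) [0..<?m])
      = concat (map (\<lambda>i. map (\<lambda>j. (ws ! i = ws ! j, gE H (ws ! i) (ws ! j))) [Suc i..<?m]) [0..<?m])"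
    using eq len unfolding atp_def by simp
  have lt: "(vs!i = vs!j \<longleftrightarrow> ws!i = ws!j) \<and> (gE G (vs!i) (vs!j) \<longleftrightarrow> gE H (ws!i) (ws!j))"
    if "i < j" "j < ?m" for i j
  proof -
    have "map (\<lambda>j. (vs ! i = vs ! j, gE G (vs ! i) (vs ! j))) [Suc i..<?m]
        = map (\<lambda>j. (ws ! i = ws ! j, gE H (ws ! i) (ws ! j))) [Suc i..<?m]"
      using concat_map_eq_elem[OF c] that by auto
    hence "\<forall>j\<in>set [Suc i..<?m]. (vs ! i = vs ! j, gE G (vs ! i) (vs ! j)) = (ws ! i = ws ! j, gE H (ws ! i) (ws ! j))"
      by (simp add: map_eq_conv)
    thus ?thesis using that by auto
  qed
  have all: "(vs!i = vs!j \<longleftrightarrow> ws!i = ws!j) \<and> (gE G (vs!i) (vs!j) \<longleftrightarrow> gE H (ws!i) (ws!j))"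
    if "i < ?m" "j < ?m" for i j
  proof (cases i j rule: linorder_cases)
    case less thus ?thesis using lt that by blast
  next
    case equal thus ?thesis using is_graph_irrefl[OF G] is_graph_irrefl[OF H] by auto
  next
    case greater
    have a: "(vs!j = vs!i \<longleftrightarrow> ws!j = ws!i) \<and> (gE G (vs!j) (vs!i) \<longleftrightarrow> gE H (ws!j) (ws!i))"
      using lt[of j i] that greater by blast
    have b: "gE G (vs!i) (vs!j) = gE G (vs!j) (vs!i)" "gE H (ws!i) (ws!j) = gE H (ws!j) (ws!i)"
      using is_graph_sym[OF G] is_graph_sym[OF H] by blast+
    show ?thesis using a b by (simp add: eq_commute[of "vs!i"] eq_commute[of "ws!i"])
  qed
  have sn: "snd (atp l G vs) = snd (atp l H ws)" using eq by (rule arg_cong)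
  hence lab: "map (\<lambda>v. map (gcol G v) [1..<Suc l]) vs = map (\<lambda>v. map (gcol H v) [1..<Suc l]) ws"
    unfolding atp_def by (simp only: snd_conv)
  have all2: "\<forall>i<length vs. \<forall>j<length vs. (vs!i = vs!j \<longleftrightarrow> ws!i = ws!j) \<and>
         (gE G (vs!i) (vs!j) \<longleftrightarrow> gE H (ws!i) (ws!j))" using all by blast
  show "Qrel l G vs H ws" unfolding Qrel_def using all2 lab len by (intro conjI)
qed

lemma Qrel_transfer:
  assumes "Qrel l G vs H ws" "length vs' = m'" "length ws' = m'"
    and "\<forall>q<m'. \<sigma> q < length vs \<and> vs'!q = vs!\<sigma> q \<and> ws'!q = ws!\<sigma> q"
  shows "Qrel l G vs' H ws'"
proof -
  have m: "map (\<lambda>v. map (gcol G v) [1..<Suc l]) vs = map (\<lambda>v. map (gcol H v) [1..<Suc l]) ws"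
    and len: "length vs = length ws" using QrelD[OF assms(1)] by auto
  have lab: "map (gcol G (vs!i)) [1..<Suc l] = map (gcol H (ws!i)) [1..<Suc l]" if "i < length vs" for i
    using arg_cong[OF m, of "\<lambda>x. x ! i"] that len by simp
  have p: "\<forall>i<length vs. \<forall>j<length vs. (vs!i = vs!j \<longleftrightarrow> ws!i = ws!j) \<and>
         (gE G (vs!i) (vs!j) \<longleftrightarrow> gE H (ws!i) (ws!j))" using QrelD(2,3)[OF assms(1)] by blast
  have lab2: "map (\<lambda>v. map (gcol G v) [1..<Suc l]) vs' = map (\<lambda>v. map (gcol H v) [1..<Suc l]) ws'"
  proof (rule nth_equalityI)
    show "length (map (\<lambda>v. map (gcol G v) [1..<Suc l]) vs') = length (map (\<lambda>v. map (gcol H v) [1..<Suc l]) ws')"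
      using assms(2,3) by simp
    fix q assume "q < length (map (\<lambda>v. map (gcol G v) [1..<Suc l]) vs')"
    hence q: "q < m'" using assms(2) by simp
    thus "map (\<lambda>v. map (gcol G v) [1..<Suc l]) vs' ! q = map (\<lambda>v. map (gcol H v) [1..<Suc l]) ws' ! q"
      using assms(2,3,4) lab[of "\<sigma> q"] by simp
  qed
  have p2: "\<forall>i<length vs'. \<forall>j<length vs'. (vs'!i = vs'!j \<longleftrightarrow> ws'!i = ws'!j) \<and>
         (gE G (vs'!i) (vs'!j) \<longleftrightarrow> gE H (ws'!i) (ws'!j))"
  proof (intro allI impI)
    fix i j assume "i < length vs'" "j < length vs'"
    hence "i < m'" "j < m'" using assms(2) by auto
    thus "(vs'!i = vs'!j \<longleftrightarrow> ws'!i = ws'!j) \<and> (gE G (vs'!i) (vs'!j) \<longleftrightarrow> gE H (ws'!i) (ws'!j))"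
    proof -
      have "\<sigma> i < length vs" "vs'!i = vs!\<sigma> i" "ws'!i = ws!\<sigma> i"
           "\<sigma> j < length vs" "vs'!j = vs!\<sigma> j" "ws'!j = ws!\<sigma> j"
        using assms(4) \<open>i < m'\<close> \<open>j < m'\<close> by blast+
      thus ?thesis using p by simp
    qed
  qed
  show ?thesis unfolding Qrel_def using p2 lab2 assms(2,3) by metis
qed

lemma atp_transfer:
  assumes G: "is_graph n l G" and H: "is_graph n l H"
    and eq: "atp l G vs = atp l H ws" and len: "length vs = length ws"
    and "length vs' = m'" "length ws' = m'"
    and "\<forall>q<m'. \<sigma> q < length vs \<and> vs'!q = vs!\<sigma> q \<and> ws'!q = ws!\<sigma> q"
  shows "atp l G vs' = atp l H ws'"
proof -
  have "Qrel l G vs H ws" using atp_eq_iff[OF G H len] eq by simp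
  hence "Qrel l G vs' H ws'" using Qrel_transfer assms(5,6,7) by blast
  thus ?thesis using atp_eq_iff[OF G H] assms(5,6) by simp
qed



lemma mset_transfer:
  assumes eq: "image_mset f A = image_mset g B"
    and cr: "\<And>x y. x \<in># A \<Longrightarrow> y \<in># B \<Longrightarrow> f x = g y \<Longrightarrow> f' x = g' y"
  shows "image_mset f' A = image_mset g' B"
proof -
  define h where "h c = f' (SOME x. x \<in># A \<and> f x = c)" for c
  have 1: "h (f x) = f' x" if x: "x \<in># A" for x
  proof -
    have ex: "\<exists>x'. x' \<in># A \<and> f x' = f x" using x by blast
    define x0 where "x0 = (SOME x'. x' \<in># A \<and> f x' = f x)"
    have x0: "x0 \<in># A \<and> f x0 = f x" unfolding x0_def by (rule someI_ex[OF ex])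
    have "f x \<in># image_mset g B" using x eq[symmetric] by (metis image_eqI set_image_mset)
    then obtain y where y: "y \<in># B" "g y = f x" by auto
    have "f' x0 = g' y" using cr x0 y by metis
    moreover have "f' x = g' y" using cr x y by metis
    ultimately show ?thesis unfolding h_def x0_def[symmetric] by simp
  qed
  have 2: "h (g y) = g' y" if y: "y \<in># B" for y
  proof -
    have "g y \<in># image_mset f A" using y eq by (metis image_eqI set_image_mset)
    hence ex: "\<exists>x'. x' \<in># A \<and> f x' = g y" by auto
    define x0 where "x0 = (SOME x'. x' \<in># A \<and> f x' = g y)"
    have x0: "x0 \<in># A \<and> f x0 = g y" unfolding x0_def by (rule someI_ex[OF ex])
    have "f' x0 = g' y" using cr x0 y by metis
    thus ?thesis unfolding h_def x0_def[symmetric] by simp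
  qed
  have "image_mset f' A = image_mset (h \<circ> f) A" using 1 by (auto intro!: image_mset_cong)
  also have "\<dots> = image_mset h (image_mset f A)" by (simp add: image_mset.compositionality)
  also have "\<dots> = image_mset h (image_mset g B)" using eq by simp
  also have "\<dots> = image_mset (h \<circ> g) B" by (simp add: image_mset.compositionality)
  also have "\<dots> = image_mset g' B" using 2 by (auto intro!: image_mset_cong)
  finally show ?thesis .
qed

lemma wl_Suc_eqD:
  assumes "wl n l G (Suc t) xs = wl n l H (Suc t) ys"
  shows "wl n l G t xs = wl n l H t ys"
    "image_mset (\<lambda>u. (atp l G (xs @ [u]), map (\<lambda>i. wl n l G t (xs[i := u])) [0..<length xs])) (mset_set {1..n})
   = image_mset (\<lambda>u. (atp l H (ys @ [u]), map (\<lambda>i. wl n l H t (ys[i := u])) [0..<length ys])) (mset_set {1..n})"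
  using assms by simp_all

lemma wl_perm:
  assumes G: "is_graph n l G" and H: "is_graph n l H"
  shows "wl n l G t xs = wl n l H t ys \<Longrightarrow> length xs = m \<Longrightarrow> length ys = m \<Longrightarrow>
    length xs' = m \<Longrightarrow> length ys' = m \<Longrightarrow> inj_on \<tau> {..<m} \<Longrightarrow>
    (\<forall>q<m. \<tau> q < m \<and> xs'!q = xs!\<tau> q \<and> ys'!q = ys!\<tau> q) \<Longrightarrow> wl n l G t xs' = wl n l H t ys'"
proof (induction t arbitrary: xs ys xs' ys')
  case 0
  thus ?case using atp_transfer[OF G H, of xs ys xs' m ys' \<tau>] by simp
next
  case (Suc t)
  note eq = wl_Suc_eqD[OF Suc.prems(1)]
  have w: "wl n l G t xs' = wl n l H t ys'" using Suc.IH[OF eq(1)] Suc.prems by blast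
  have ms: "image_mset (\<lambda>u. (atp l G (xs' @ [u]), map (\<lambda>i. wl n l G t (xs'[i := u])) [0..<length xs'])) (mset_set {1..n})
   = image_mset (\<lambda>u. (atp l H (ys' @ [u]), map (\<lambda>i. wl n l H t (ys'[i := u])) [0..<length ys'])) (mset_set {1..n})"
  proof (rule mset_transfer[OF eq(2)])
    fix u u'
    assume e: "(atp l G (xs @ [u]), map (\<lambda>i. wl n l G t (xs[i := u])) [0..<length xs]) =
       (atp l H (ys @ [u']), map (\<lambda>i. wl n l H t (ys[i := u'])) [0..<length ys])"
    have a: "atp l G (xs @ [u]) = atp l H (ys @ [u'])" using e by simp
    have mm: "map (\<lambda>i. wl n l G t (xs[i := u])) [0..<m] = map (\<lambda>i. wl n l H t (ys[i := u'])) [0..<m]"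
      using e Suc.prems(2,3) by simp
    have a': "atp l G (xs' @ [u]) = atp l H (ys' @ [u'])"
    proof (rule atp_transfer[OF G H a, where \<sigma> = "\<lambda>q. if q < m then \<tau> q else m" and m' = "Suc m"])
      show "length (xs @ [u]) = length (ys @ [u'])" using Suc.prems by simp
      show "length (xs' @ [u]) = Suc m" "length (ys' @ [u']) = Suc m" using Suc.prems by simp_all
      show "\<forall>q<Suc m. (if q < m then \<tau> q else m) < length (xs @ [u]) \<and>
          (xs' @ [u]) ! q = (xs @ [u]) ! (if q < m then \<tau> q else m) \<and>
          (ys' @ [u']) ! q = (ys @ [u']) ! (if q < m then \<tau> q else m)"
        using Suc.prems(2-5,7) by (auto simp: nth_append)
    qed
    have b: "wl n l G t (xs'[i := u]) = wl n l H t (ys'[i := u'])" if i: "i < m" for i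
    proof (rule Suc.IH)
      have ti: "\<tau> i < m" using Suc.prems(7) i by blast
      show "wl n l G t (xs[\<tau> i := u]) = wl n l H t (ys[\<tau> i := u'])"
        using arg_cong[OF mm, of "\<lambda>x. x ! \<tau> i"] ti by simp
      show "length (xs[\<tau> i := u]) = m" "length (ys[\<tau> i := u']) = m" "length (xs'[i := u]) = m"
        "length (ys'[i := u']) = m" using Suc.prems by simp_all
      show "inj_on \<tau> {..<m}" by fact
      show "\<forall>q<m. \<tau> q < m \<and> xs'[i := u] ! q = xs[\<tau> i := u] ! \<tau> q \<and> ys'[i := u'] ! q = ys[\<tau> i := u'] ! \<tau> q"
      proof (intro allI impI)
        fix q assume q: "q < m"
        have tq: "\<tau> q < m" "xs'!q = xs!\<tau> q" "ys'!q = ys!\<tau> q" using Suc.prems(7) q by blast+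
        have iff: "\<tau> q = \<tau> i \<longleftrightarrow> q = i" using Suc.prems(6) q i by (auto dest: inj_onD)
        show "\<tau> q < m \<and> xs'[i := u] ! q = xs[\<tau> i := u] ! \<tau> q \<and> ys'[i := u'] ! q = ys[\<tau> i := u'] ! \<tau> q"
          using tq iff q i Suc.prems(2-5) by (auto simp: nth_list_update)
      qed
    qed
    show "(atp l G (xs' @ [u]), map (\<lambda>i. wl n l G t (xs'[i := u])) [0..<length xs']) =
       (atp l H (ys' @ [u']), map (\<lambda>i. wl n l H t (ys'[i := u'])) [0..<length ys'])"
      using a' b Suc.prems(4,5) by simp
  qed
  show ?case using w ms by simp
qed



definition tup :: "nat \<Rightarrow> (nat \<Rightarrow> nat) \<Rightarrow> nat \<Rightarrow> nat list" where
  "tup k \<nu> j = map (\<lambda>i. \<nu> (if i = j then Suc k else i)) [1..<Suc k]"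

definition full :: "nat \<Rightarrow> (nat \<Rightarrow> nat) \<Rightarrow> nat list" where
  "full k \<nu> = map \<nu> [1..<Suc (Suc k)]"

definition TT :: "nat \<Rightarrow> nat \<Rightarrow> nat \<Rightarrow> graph \<Rightarrow> nat \<Rightarrow> (nat \<Rightarrow> nat) \<Rightarrow> atype \<times> wlab list" where
  "TT n l k G t \<nu> = (atp l G (full k \<nu>), map (\<lambda>j. wl n l G t (tup k \<nu> j)) [1..<Suc (Suc k)])"

definition sig :: "nat \<Rightarrow> nat \<Rightarrow> nat \<Rightarrow> nat" where
  "sig k j q = (if Suc q = j then k else if q = k then j - 1 else q)"

definition pp :: "nat \<Rightarrow> nat \<Rightarrow> nat \<Rightarrow> nat" where
  "pp k i j = (if i = Suc k then j - 1 else i - 1)"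

definition tau :: "nat \<Rightarrow> nat \<Rightarrow> nat \<Rightarrow> nat \<Rightarrow> nat" where
  "tau k i j q = (if i \<le> k \<and> j \<le> k then (if q = i - 1 then j - 1 else if q = j - 1 then i - 1 else q) else q)"

lemma length_tup[simp]: "length (tup k \<nu> j) = k" by (simp add: tup_def)
lemma length_full[simp]: "length (full k \<nu>) = Suc k" by (simp add: full_def)

lemma nth_tup: "q < k \<Longrightarrow> tup k \<nu> j ! q = \<nu> (if Suc q = j then Suc k else Suc q)"
  by (simp add: tup_def del: upt_Suc)
lemma nth_full: "q < Suc k \<Longrightarrow> full k \<nu> ! q = \<nu> (Suc q)"
  by (simp add: full_def del: upt_Suc)

lemma full_upd:
  assumes j: "j \<in> {1..Suc k}" and q: "q < Suc k"
  shows "sig k j q < Suc k \<and> full k (\<nu>(j:=u)) ! q = (tup k \<nu> j @ [u]) ! sig k j q"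
  using j q by (auto simp: sig_def nth_full nth_append nth_tup)

lemma tup_same:
  assumes j: "j \<in> {1..Suc k}"
  shows "tup k (\<nu>(j:=u)) j = tup k \<nu> j"
  using j by (auto simp: tup_def intro!: map_cong)

lemma tup_upd:
  assumes j: "j \<in> {1..Suc k}" and i: "i \<in> {1..Suc k}" and ij: "i \<noteq> j" and q: "q < k"
  shows "tau k i j q < k \<and> tup k (\<nu>(j:=u)) i ! q = ((tup k \<nu> j)[pp k i j := u]) ! tau k i j q"
  using j i ij q by (auto simp: tau_def pp_def nth_tup nth_list_update)

lemma pp_lt: "j \<in> {1..Suc k} \<Longrightarrow> i \<in> {1..Suc k} \<Longrightarrow> i \<noteq> j \<Longrightarrow> pp k i j < k"
  by (auto simp: pp_def)

lemma tau_inj: "inj_on (tau k i j) {..<k}"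
  by (auto simp: tau_def inj_on_def split: if_splits)

lemma keyX:
  assumes G: "is_graph n l G" and H: "is_graph n l H"
    and j: "j \<in> {1..Suc k}"
    and w: "wl n l G t (tup k \<nu> j) = wl n l H t (tup k \<mu> j)"
    and e: "(atp l G (tup k \<nu> j @ [u]), map (\<lambda>i. wl n l G t ((tup k \<nu> j)[i := u])) [0..<length (tup k \<nu> j)]) =
       (atp l H (tup k \<mu> j @ [u']), map (\<lambda>i. wl n l H t ((tup k \<mu> j)[i := u'])) [0..<length (tup k \<mu> j)])"
  shows "TT n l k G t (\<nu>(j:=u)) = TT n l k H t (\<mu>(j:=u'))"
proof -
  have a: "atp l G (tup k \<nu> j @ [u]) = atp l H (tup k \<mu> j @ [u'])" using e by simp
  have mm: "map (\<lambda>i. wl n l G t ((tup k \<nu> j)[i := u])) [0..<k] = map (\<lambda>i. wl n l H t ((tup k \<mu> j)[i := u'])) [0..<k]"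
    using e by simp
  have a': "atp l G (full k (\<nu>(j:=u))) = atp l H (full k (\<mu>(j:=u')))"
  proof (rule atp_transfer[OF G H a, where \<sigma> = "sig k j" and m' = "Suc k"])
    show "length (tup k \<nu> j @ [u]) = length (tup k \<mu> j @ [u'])" by simp
    show "length (full k (\<nu>(j := u))) = Suc k" "length (full k (\<mu>(j := u'))) = Suc k" by simp_all
    show "\<forall>q<Suc k. sig k j q < length (tup k \<nu> j @ [u]) \<and>
        full k (\<nu>(j := u)) ! q = (tup k \<nu> j @ [u]) ! sig k j q \<and>
        full k (\<mu>(j := u')) ! q = (tup k \<mu> j @ [u']) ! sig k j q"
      using full_upd[OF j] by simp
  qed
  have b: "wl n l G t (tup k (\<nu>(j:=u)) i) = wl n l H t (tup k (\<mu>(j:=u')) i)" if i: "i \<in> {1..Suc k}" for i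
  proof (cases "i = j")
    case True thus ?thesis using w tup_same[OF j] by simp
  next
    case False
    have p: "pp k i j < k" using pp_lt[OF j i False] .
    show ?thesis
    proof (rule wl_perm[OF G H, where m = k and \<tau> = "tau k i j"])
      show "wl n l G t ((tup k \<nu> j)[pp k i j := u]) = wl n l H t ((tup k \<mu> j)[pp k i j := u'])"
        using arg_cong[OF mm, of "\<lambda>x. x ! pp k i j"] p by simp
      show "length ((tup k \<nu> j)[pp k i j := u]) = k" "length ((tup k \<mu> j)[pp k i j := u']) = k"
        "length (tup k (\<nu>(j := u)) i) = k" "length (tup k (\<mu>(j := u')) i) = k" by simp_all
      show "inj_on (tau k i j) {..<k}" by (rule tau_inj)
      show "\<forall>q<k. tau k i j q < k \<and> tup k (\<nu>(j := u)) i ! q = (tup k \<nu> j)[pp k i j := u] ! tau k i j q \<and>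
          tup k (\<mu>(j := u')) i ! q = (tup k \<mu> j)[pp k i j := u'] ! tau k i j q"
        using tup_upd[OF j i False] by blast
    qed
  qed
  have b': "map (\<lambda>i. wl n l G t (tup k (\<nu>(j:=u)) i)) [1..<Suc (Suc k)] = map (\<lambda>i. wl n l H t (tup k (\<mu>(j:=u')) i)) [1..<Suc (Suc k)]"
    using b by (auto intro!: map_cong)
  show ?thesis unfolding TT_def using a' b' by simp
qed



fun sdp :: "tl \<Rightarrow> nat" where
  "sdp (Mul a b) = sdp a + sdp b"
| "sdp (Add a b) = sdp a + sdp b"
| "sdp (Smul c a) = sdp a"
| "sdp (App f as) = sum_list (map sdp as)"
| "sdp (Sum x a) = Suc (sdp a)"
| "sdp _ = 0"

lemma sdp_App: "a \<in> set as \<Longrightarrow> sdp a \<le> sdp (App f as)"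
  by (simp add: member_le_sum_list)

lemma TT_comp:
  assumes "TT n l k G t \<nu> = TT n l k H t \<mu>" "j \<in> {1..Suc k}"
  shows "wl n l G t (tup k \<nu> j) = wl n l H t (tup k \<mu> j)"
proof -
  have "map (\<lambda>j. wl n l G t (tup k \<nu> j)) [1..<Suc (Suc k)] = map (\<lambda>j. wl n l H t (tup k \<mu> j)) [1..<Suc (Suc k)]"
    using assms(1) unfolding TT_def by simp
  hence "\<forall>j\<in>set [1..<Suc (Suc k)]. wl n l G t (tup k \<nu> j) = wl n l H t (tup k \<mu> j)"
    by (simp only: map_eq_conv)
  moreover have "j \<in> set [1..<Suc (Suc k)]" using assms(2) by (simp del: upt_Suc)
  ultimately show ?thesis by blast
qed

lemma TT_atp:
  assumes G: "is_graph n l G" and H: "is_graph n l H" and "TT n l k G t \<nu> = TT n l k H t \<mu>"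
  shows "Qrel l G (full k \<nu>) H (full k \<mu>)"
proof -
  have "atp l G (full k \<nu>) = atp l H (full k \<mu>)" using assms(3) unfolding TT_def by simp
  thus ?thesis using atp_eq_iff[OF G H] by simp
qed

lemma TT_atoms:
  assumes G: "is_graph n l G" and H: "is_graph n l H" and T: "TT n l k G t \<nu> = TT n l k H t \<mu>"
    and x: "x \<in> {1..Suc k}" and y: "y \<in> {1..Suc k}"
  shows "(\<nu> x = \<nu> y \<longleftrightarrow> \<mu> x = \<mu> y)" "(gE G (\<nu> x) (\<nu> y) \<longleftrightarrow> gE H (\<mu> x) (\<mu> y))"
    "s \<in> {1..l} \<Longrightarrow> gcol G (\<nu> x) s = gcol H (\<mu> x) s"
proof -
  note Q = TT_atp[OF G H T]
  have xi: "x - 1 < length (full k \<nu>)" "y - 1 < length (full k \<nu>)" using x y by auto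
  have fx: "full k \<nu> ! (x-1) = \<nu> x" "full k \<mu> ! (x-1) = \<mu> x" "full k \<nu> ! (y-1) = \<nu> y" "full k \<mu> ! (y-1) = \<mu> y"
    using x y by (auto simp: nth_full)
  show "(\<nu> x = \<nu> y \<longleftrightarrow> \<mu> x = \<mu> y)" using QrelD(2)[OF Q xi] fx by simp
  show "(gE G (\<nu> x) (\<nu> y) \<longleftrightarrow> gE H (\<mu> x) (\<mu> y))" using QrelD(3)[OF Q xi] fx by simp
  assume s: "s \<in> {1..l}"
  have "map (gcol G (\<nu> x)) [1..<Suc l] = map (gcol H (\<mu> x)) [1..<Suc l]"
    using arg_cong[OF QrelD(4)[OF Q], of "\<lambda>z. z ! (x-1)"] xi fx by simp
  hence "\<forall>s\<in>set [1..<Suc l]. gcol G (\<nu> x) s = gcol H (\<mu> x) s" by (simp only: map_eq_conv)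
  moreover have "s \<in> set [1..<Suc l]" using s by (simp del: upt_Suc)
  ultimately show "gcol G (\<nu> x) s = gcol H (\<mu> x) s" by blast
qed

lemma D1:
  assumes G: "is_graph n l G" and H: "is_graph n l H"
  shows "wf_tl l \<Omega> \<phi> \<Longrightarrow> vars \<phi> \<subseteq> {1..Suc k} \<Longrightarrow> sdp \<phi> \<le> t \<Longrightarrow>
    TT n l k G t \<nu> = TT n l k H t \<mu> \<Longrightarrow> eval n G \<nu> \<phi> = eval n H \<mu> \<phi>"
proof (induction \<phi> arbitrary: t \<nu> \<mu>)
  case (EqI x y) thus ?case using TT_atoms(1)[OF G H EqI.prems(4), of x y] by simp
next
  case (NeqI x y) thus ?case using TT_atoms(1)[OF G H NeqI.prems(4), of x y] by simp
next
  case (Edge x y) thus ?case using TT_atoms(2)[OF G H Edge.prems(4), of x y] by simp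
next
  case (Lab s x) thus ?case using TT_atoms(3)[OF G H Lab.prems(4), of x x s] by simp
next
  case (Mul a b)
  have "eval n G \<nu> a = eval n H \<mu> a" using Mul.IH(1)[of t \<nu> \<mu>] Mul.prems by simp
  moreover have "eval n G \<nu> b = eval n H \<mu> b" using Mul.IH(2)[of t \<nu> \<mu>] Mul.prems by simp
  ultimately show ?case by simp
next
  case (Add a b)
  have "eval n G \<nu> a = eval n H \<mu> a" using Add.IH(1)[of t \<nu> \<mu>] Add.prems by simp
  moreover have "eval n G \<nu> b = eval n H \<mu> b" using Add.IH(2)[of t \<nu> \<mu>] Add.prems by simp
  ultimately show ?case by simp
next
  case (Smul c a)
  have e: "eval n G \<nu> a = eval n H \<mu> a" using Smul.IH[of t \<nu> \<mu>] Smul.prems by simp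
  show ?case by (simp only: eval.simps e)
next
  case (App f as)
  have "map (eval n G \<nu>) as = map (eval n H \<mu>) as"
  proof (rule map_cong[OF refl])
    fix a assume a: "a \<in> set as"
    show "eval n G \<nu> a = eval n H \<mu> a"
    proof (rule App.IH[OF a])
      show "wf_tl l \<Omega> a" using App.prems(1) a by simp
      show "vars a \<subseteq> {1..Suc k}" using App.prems(2) a by auto
      show "sdp a \<le> t" using App.prems(3) sdp_App[OF a, of f] by linarith
      show "TT n l k G t \<nu> = TT n l k H t \<mu>" by (rule App.prems(4))
    qed
  qed
  thus ?case by (simp only: eval.simps)
next
  case (Sum x a)
  from Sum.prems(3) obtain t' where t: "t = Suc t'" "sdp a \<le> t'" by (cases t) auto
  have x: "x \<in> {1..Suc k}" using Sum.prems(2) by simp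
  have wS: "wl n l G (Suc t') (tup k \<nu> x) = wl n l H (Suc t') (tup k \<mu> x)"
    using TT_comp[OF Sum.prems(4) x] t by simp
  note eq = wl_Suc_eqD[OF wS]
  have "image_mset (\<lambda>u. eval n G (\<nu>(x:=u)) a) (mset_set {1..n}) = image_mset (\<lambda>u. eval n H (\<mu>(x:=u)) a) (mset_set {1..n})"
  proof (rule mset_transfer[OF eq(2)])
    fix u u' assume e: "(atp l G (tup k \<nu> x @ [u]), map (\<lambda>i. wl n l G t' ((tup k \<nu> x)[i := u])) [0..<length (tup k \<nu> x)]) =
       (atp l H (tup k \<mu> x @ [u']), map (\<lambda>i. wl n l H t' ((tup k \<mu> x)[i := u'])) [0..<length (tup k \<mu> x)])"
    have TTe: "TT n l k G t' (\<nu>(x:=u)) = TT n l k H t' (\<mu>(x:=u'))" by (rule keyX[OF G H x eq(1) e])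
    show "eval n G (\<nu>(x:=u)) a = eval n H (\<mu>(x:=u')) a"
    proof (rule Sum.IH[OF _ _ _ TTe])
      show "wf_tl l \<Omega> a" using Sum.prems(1) by simp
      show "vars a \<subseteq> {1..Suc k}" using Sum.prems(2) by auto
      show "sdp a \<le> t'" by (rule t(2))
    qed
  qed
  hence "sum_mset (image_mset (\<lambda>u. eval n G (\<nu>(x:=u)) a) (mset_set {1..n})) = sum_mset (image_mset (\<lambda>u. eval n H (\<mu>(x:=u)) a) (mset_set {1..n}))"
    by simp
  thus ?case by (simp add: sum_unfold_sum_mset)
qed



lemma full_const: "full k (\<lambda>_. v) = replicate (Suc k) v"
  by (simp add: full_def map_replicate_const del: upt_Suc)
lemma tup_const: "tup k (\<lambda>_. v) j = replicate k v"
  by (simp add: tup_def map_replicate_const del: upt_Suc)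

lemma dir1:
  assumes k: "k \<ge> 1" and in1: "((G,v),(H,w)) \<in> rho1_vwl_inf n l k"
  shows "((G,v),(H,w)) \<in> rho1_TL n l (TL l \<Omega> (k+1))"
proof -
  have G: "is_graph n l G" and H: "is_graph n l H" and v: "v \<in> {1..n}" and w: "w \<in> {1..n}"
    and all: "\<And>t. wl n l G t (replicate k v) = wl n l H t (replicate k w)"
    using in1 unfolding rho1_vwl_inf_def vwl_def by auto
  have a0: "atp l G (replicate k v) = atp l H (replicate k w)" using all[of 0] by simp
  have afull: "atp l G (full k (\<lambda>_. v)) = atp l H (full k (\<lambda>_. w))"
    unfolding full_const
    by (rule atp_transfer[OF G H a0, where \<sigma> = "\<lambda>_. 0" and m' = "Suc k"]) (use k in \<open>auto simp del: replicate_Suc simp: nth_replicate\<close>)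
  have TTe: "TT n l k G t (\<lambda>_. v) = TT n l k H t (\<lambda>_. w)" for t
    unfolding TT_def using afull all[of t] by (simp add: tup_const del: upt_Suc)
  show ?thesis unfolding rho1_TL_def
  proof (clarsimp simp only: mem_Collect_eq case_prod_conv, intro conjI ballI impI)
    show "is_graph n l G" "is_graph n l H" "v \<in> {1..n}" "w \<in> {1..n}" by fact+
    fix \<phi> assume "\<phi> \<in> TL l \<Omega> (k + 1)"
    hence "wf_tl l \<Omega> \<phi>" "vars \<phi> \<subseteq> {1..Suc k}" unfolding TL_def by auto
    thus "eval n G (\<lambda>_. v) \<phi> = eval n H (\<lambda>_. w) \<phi>"
      using D1[OF G H _ _ order_refl TTe] by blast
  qed
qed



definition one :: tl where "one = EqI 1 1"
definition zero :: tl where "zero = Smul 0 one"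

lemma one_props[simp]: "eval n G \<nu> one = 1" "vars one = {1}" "free one = {1}" "wf_tl l \<Omega> one"
  by (simp_all add: one_def)
lemma zero_props[simp]: "eval n G \<nu> zero = 0" "vars zero = {1}" "wf_tl l \<Omega> zero"
  by (simp_all add: zero_def)

fun prodtl :: "tl list \<Rightarrow> tl" where
  "prodtl [] = one"
| "prodtl (f # fs) = Mul f (prodtl fs)"

lemma eval_prodtl: "eval n G \<nu> (prodtl fs) = prod_list (map (eval n G \<nu>) fs)"
  by (induction fs) simp_all
lemma vars_prodtl: "vars (prodtl fs) \<subseteq> {1} \<union> (\<Union>f\<in>set fs. vars f)"
  by (induction fs) auto
lemma wf_prodtl: "(\<forall>f\<in>set fs. wf_tl l \<Omega> f) \<Longrightarrow> wf_tl l \<Omega> (prodtl fs)"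
  by (induction fs) auto

lemma eval_prodtl_ind:
  assumes "\<forall>i\<in>set idx. eval n G \<nu> (g i) = (if C i then 1 else 0)"
  shows "eval n G \<nu> (prodtl (map g idx)) = (if \<forall>i\<in>set idx. C i then 1 else 0)"
  using assms by (induction idx) auto

lemma prod_list_ones: "prod_list (map (\<lambda>r. (1::real)) xs) = 1"
  by (induction xs) auto

definition lagf :: "real list \<Rightarrow> real \<Rightarrow> tl \<Rightarrow> tl" where
  "lagf rs m \<phi> = prodtl (map (\<lambda>r. Smul (1 / (m - r)) (Add \<phi> (Smul (- r) one))) (filter (\<lambda>r. r \<noteq> m) rs))"

lemma eval_lagf:
  assumes "eval n G \<nu> \<phi> \<in> set rs"
  shows "eval n G \<nu> (lagf rs m \<phi>) = (if eval n G \<nu> \<phi> = m then 1 else 0)"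
proof -
  let ?y = "eval n G \<nu> \<phi>"
  have e: "eval n G \<nu> (lagf rs m \<phi>) = prod_list (map (\<lambda>r. (1 / (m - r)) * (?y + - r * 1)) (filter (\<lambda>r. r \<noteq> m) rs))"
    unfolding lagf_def eval_prodtl by (simp add: comp_def)
  show ?thesis
  proof (cases "?y = m")
    case True
    have "map (\<lambda>r. (1 / (m - r)) * (?y + - r * 1)) (filter (\<lambda>r. r \<noteq> m) rs) = map (\<lambda>r. 1) (filter (\<lambda>r. r \<noteq> m) rs)"
      using True by (auto intro!: map_cong)
    hence "prod_list (map (\<lambda>r. (1 / (m - r)) * (?y + - r * 1)) (filter (\<lambda>r. r \<noteq> m) rs)) = 1"
      by (simp only: prod_list_ones)
    thus ?thesis using e True by simp
  next
    case False
    have "?y \<in> set (filter (\<lambda>r. r \<noteq> m) rs)" using assms False by simp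
    hence "0 \<in> set (map (\<lambda>r. (1 / (m - r)) * (?y + - r * 1)) (filter (\<lambda>r. r \<noteq> m) rs))"
      by (force simp: image_iff)
    hence "prod_list (map (\<lambda>r. (1 / (m - r)) * (?y + - r * 1)) (filter (\<lambda>r. r \<noteq> m) rs)) = 0"
      by (simp add: prod_list_zero_iff)
    thus ?thesis using e False by simp
  qed
qed

lemma vars_lagf: "vars (lagf rs m \<phi>) \<subseteq> {1} \<union> vars \<phi>"
  unfolding lagf_def using vars_prodtl by fastforce
lemma wf_lagf: "wf_tl l \<Omega> \<phi> \<Longrightarrow> wf_tl l \<Omega> (lagf rs m \<phi>)"
  unfolding lagf_def by (rule wf_prodtl) auto



fun ren :: "(nat \<Rightarrow> nat) \<Rightarrow> tl \<Rightarrow> tl" where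
  "ren \<pi> (EqI x y) = EqI (\<pi> x) (\<pi> y)"
| "ren \<pi> (NeqI x y) = NeqI (\<pi> x) (\<pi> y)"
| "ren \<pi> (Edge x y) = Edge (\<pi> x) (\<pi> y)"
| "ren \<pi> (Lab s x) = Lab s (\<pi> x)"
| "ren \<pi> (Mul a b) = Mul (ren \<pi> a) (ren \<pi> b)"
| "ren \<pi> (Add a b) = Add (ren \<pi> a) (ren \<pi> b)"
| "ren \<pi> (Smul c a) = Smul c (ren \<pi> a)"
| "ren \<pi> (App f as) = App f (map (ren \<pi>) as)"
| "ren \<pi> (Sum x a) = Sum (\<pi> x) (ren \<pi> a)"

lemma eval_ren: "inj \<pi> \<Longrightarrow> eval n G \<nu> (ren \<pi> \<phi>) = eval n G (\<nu> \<circ> \<pi>) \<phi>"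
proof (induction \<phi> arbitrary: \<nu>)
  case (App f as)
  have "map (eval n G \<nu>) (map (ren \<pi>) as) = map (eval n G (\<nu> \<circ> \<pi>)) as"
    using App by (simp add: comp_def)
  thus ?case by (simp only: ren.simps eval.simps)
next
  case (Sum x a)
  have "(\<nu>(\<pi> x := u)) \<circ> \<pi> = (\<nu> \<circ> \<pi>)(x := u)" for u
    using Sum.prems by (auto simp: fun_eq_iff inj_eq)
  hence "eval n G (\<nu>(\<pi> x := u)) (ren \<pi> a) = eval n G ((\<nu> \<circ> \<pi>)(x := u)) a" for u
    using Sum.IH[OF Sum.prems, of "\<nu>(\<pi> x := u)"] by metis
  thus ?case by (simp only: ren.simps eval.simps)
qed simp_all

lemma vars_ren: "vars (ren \<pi> \<phi>) = \<pi> ` vars \<phi>"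
  by (induction \<phi>) auto

lemma wf_ren: "wf_tl l \<Omega> (ren \<pi> \<phi>) = wf_tl l \<Omega> \<phi>"
  by (induction \<phi>) auto

definition sw :: "nat \<Rightarrow> nat \<Rightarrow> nat \<Rightarrow> nat" where
  "sw a b x = (if x = a then b else if x = b then a else x)"

lemma inj_sw: "inj (sw a b)"
  by (auto simp: inj_def sw_def split: if_splits)



definition PhiA :: "nat \<Rightarrow> graph \<Rightarrow> nat list \<Rightarrow> real list \<Rightarrow> nat \<Rightarrow> tl" where
  "PhiA l X vs0 rs m =
    Mul (prodtl (map (\<lambda>(i,j). if vs0!i = vs0!j then EqI (Suc i) (Suc j) else NeqI (Suc i) (Suc j)) (List.product [0..<m] [0..<m])))
    (Mul (prodtl (map (\<lambda>(i,j). if gE X (vs0!i) (vs0!j) then Edge (Suc i) (Suc j) else Add one (Smul (-1) (Edge (Suc i) (Suc j)))) (List.product [0..<m] [0..<m])))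
      (prodtl (map (\<lambda>(i,s). lagf rs (gcol X (vs0!i) s) (Lab s (Suc i))) (List.product [0..<m] [1..<Suc l]))))"

lemma Qrel_map_iff:
  assumes "length vs0 = m"
  shows "Qrel l Y (map \<nu> [1..<Suc m]) X vs0 \<longleftrightarrow>
    (\<forall>i<m. \<forall>j<m. (\<nu> (Suc i) = \<nu> (Suc j) \<longleftrightarrow> vs0!i = vs0!j) \<and> (gE Y (\<nu> (Suc i)) (\<nu> (Suc j)) \<longleftrightarrow> gE X (vs0!i) (vs0!j)))
    \<and> (\<forall>i<m. \<forall>s\<in>{1..l}. gcol Y (\<nu> (Suc i)) s = gcol X (vs0!i) s)"
proof -
  have nth: "map \<nu> [1..<Suc m] ! i = \<nu> (Suc i)" if "i < m" for i using that by (simp del: upt_Suc)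
  have len: "length (map \<nu> [1..<Suc m]) = m" by simp
  have lab: "map (\<lambda>v. map (gcol Y v) [1..<Suc l]) (map \<nu> [1..<Suc m]) = map (\<lambda>v. map (gcol X v) [1..<Suc l]) vs0
     \<longleftrightarrow> (\<forall>i<m. \<forall>s\<in>{1..l}. gcol Y (\<nu> (Suc i)) s = gcol X (vs0!i) s)"
  proof -
    have "map (\<lambda>v. map (gcol Y v) [1..<Suc l]) (map \<nu> [1..<Suc m]) = map (\<lambda>v. map (gcol X v) [1..<Suc l]) vs0
      \<longleftrightarrow> (\<forall>i<m. map (gcol Y (\<nu> (Suc i))) [1..<Suc l] = map (gcol X (vs0!i)) [1..<Suc l])"
      using assms nth by (simp add: list_eq_iff_nth_eq del: upt_Suc)
    also have "\<dots> \<longleftrightarrow> (\<forall>i<m. \<forall>s\<in>{1..l}. gcol Y (\<nu> (Suc i)) s = gcol X (vs0!i) s)"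
      by (simp only: map_eq_conv set_upt) (auto)
    finally show ?thesis .
  qed
  show ?thesis unfolding Qrel_def len using lab assms nth by auto
qed

lemma eval_PhiA:
  assumes GY: "is_graph n l Y" and GX: "is_graph n l X" and len: "length vs0 = m"
    and rs: "\<forall>i<m. \<forall>s\<in>{1..l}. gcol Y (\<nu> (Suc i)) s \<in> set rs"
  shows "eval n Y \<nu> (PhiA l X vs0 rs m) = (if atp l Y (map \<nu> [1..<Suc m]) = atp l X vs0 then 1 else 0)"
proof -
  have e1: "eval n Y \<nu> (prodtl (map (\<lambda>(i,j). if vs0!i = vs0!j then EqI (Suc i) (Suc j) else NeqI (Suc i) (Suc j)) (List.product [0..<m] [0..<m])))
     = (if \<forall>p\<in>set (List.product [0..<m] [0..<m]). (\<lambda>(i,j). (\<nu> (Suc i) = \<nu> (Suc j) \<longleftrightarrow> vs0!i = vs0!j)) p then 1 else 0)"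
    by (rule eval_prodtl_ind) auto
  have e2: "eval n Y \<nu> (prodtl (map (\<lambda>(i,j). if gE X (vs0!i) (vs0!j) then Edge (Suc i) (Suc j) else Add one (Smul (-1) (Edge (Suc i) (Suc j)))) (List.product [0..<m] [0..<m])))
     = (if \<forall>p\<in>set (List.product [0..<m] [0..<m]). (\<lambda>(i,j). (gE Y (\<nu> (Suc i)) (\<nu> (Suc j)) \<longleftrightarrow> gE X (vs0!i) (vs0!j))) p then 1 else 0)"
    by (rule eval_prodtl_ind) auto
  have e3: "eval n Y \<nu> (prodtl (map (\<lambda>(i,s). lagf rs (gcol X (vs0!i) s) (Lab s (Suc i))) (List.product [0..<m] [1..<Suc l])))
     = (if \<forall>p\<in>set (List.product [0..<m] [1..<Suc l]). (\<lambda>(i,s). gcol Y (\<nu> (Suc i)) s = gcol X (vs0!i) s) p then 1 else 0)"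
  proof (rule eval_prodtl_ind, clarify)
    fix i s assume "(i, s) \<in> set (List.product [0..<m] [1..<Suc l])"
    hence "i < m" "s \<in> {1..l}" by auto
    hence "eval n Y \<nu> (Lab s (Suc i)) \<in> set rs" using rs by simp
    thus "eval n Y \<nu> (lagf rs (gcol X (vs0 ! i) s) (Lab s (Suc i))) =
          (if gcol Y (\<nu> (Suc i)) s = gcol X (vs0 ! i) s then 1 else 0)"
      by (simp add: eval_lagf)
  qed
  have iff: "atp l Y (map \<nu> [1..<Suc m]) = atp l X vs0 \<longleftrightarrow>
    (\<forall>i<m. \<forall>j<m. (\<nu> (Suc i) = \<nu> (Suc j) \<longleftrightarrow> vs0!i = vs0!j) \<and> (gE Y (\<nu> (Suc i)) (\<nu> (Suc j)) \<longleftrightarrow> gE X (vs0!i) (vs0!j)))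
    \<and> (\<forall>i<m. \<forall>s\<in>{1..l}. gcol Y (\<nu> (Suc i)) s = gcol X (vs0!i) s)"
    using atp_eq_iff[OF GY GX, of "map \<nu> [1..<Suc m]" vs0] Qrel_map_iff[OF len] len by simp
  show ?thesis unfolding PhiA_def eval.simps(5) e1 e2 e3 iff by (auto simp del: upt_Suc)
qed

lemma vars_PhiA: "m \<le> Suc k \<Longrightarrow> vars (PhiA l X vs0 rs m) \<subseteq> {1..Suc k}"
  unfolding PhiA_def using vars_prodtl vars_lagf
  apply (simp only: vars.simps)
  apply (intro Un_least)
  subgoal using vars_prodtl[of "map (\<lambda>(i,j). if vs0!i = vs0!j then EqI (Suc i) (Suc j) else NeqI (Suc i) (Suc j)) (List.product [0..<m] [0..<m])"]
    by (fastforce split: if_splits)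
  subgoal using vars_prodtl[of "map (\<lambda>(i,j). if gE X (vs0!i) (vs0!j) then Edge (Suc i) (Suc j) else Add one (Smul (-1) (Edge (Suc i) (Suc j)))) (List.product [0..<m] [0..<m])"]
    by (fastforce split: if_splits)
  subgoal using vars_prodtl[of "map (\<lambda>(i,s). lagf rs (gcol X (vs0!i) s) (Lab s (Suc i))) (List.product [0..<m] [1..<Suc l])"]
      vars_lagf by fastforce
  done

lemma wf_PhiA: "wf_tl l \<Omega> (PhiA l X vs0 rs m)"
  unfolding PhiA_def by (auto intro!: wf_prodtl wf_lagf)



lemma label_list:
  "\<exists>rs. \<forall>Y\<in>{G,H}. \<forall>v\<in>{1..n}. \<forall>s\<in>{1..l}. gcol Y v s \<in> set (rs :: real list)"
proof -
  let ?A = "(\<lambda>(Y,v,s). gcol Y v s) ` ({G,H} \<times> {1..n} \<times> {1..l})"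
  have fin: "finite ?A"
    by (intro finite_imageI finite_cartesian_product) auto
  obtain rs where rs: "set rs = ?A" using finite_list[OF fin] by (elim exE)
  show ?thesis
  proof (intro exI ballI)
    fix Y v s assume "Y \<in> {G,H}" "v \<in> {1..n}" "s \<in> {1..l}"
    hence "(Y,v,s) \<in> {G,H} \<times> {1..n} \<times> {1..l}" by simp
    hence "(\<lambda>(Y,v,s). gcol Y v s) (Y,v,s) \<in> ?A" by (rule imageI)
    thus "gcol Y v s \<in> set rs" unfolding rs by simp
  qed
qed

lemma IndA:
  assumes G: "is_graph n l G" and H: "is_graph n l H" and m: "m \<le> Suc k"
  shows "\<exists>\<phi>. wf_tl l \<Omega> \<phi> \<and> vars \<phi> \<subseteq> {1..Suc k} \<and>
    (\<forall>\<nu>. (\<forall>i\<in>{1..m}. \<nu> i \<in> {1..n}) \<longrightarrow>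
       eval n G \<nu> \<phi> = (if atp l G (map \<nu> [1..<Suc m]) = a then 1 else 0) \<and>
       eval n H \<nu> \<phi> = (if atp l H (map \<nu> [1..<Suc m]) = a then 1 else 0))"
proof (cases "\<exists>X vs0. X \<in> {G,H} \<and> length vs0 = m \<and> atp l X vs0 = a")
  case True
  then obtain X vs0 where X: "X \<in> {G,H}" "length vs0 = m" "atp l X vs0 = a" by blast
  have GX: "is_graph n l X" using X G H by auto
  obtain rs where rs: "\<forall>Y\<in>{G,H}. \<forall>v\<in>{1..n}. \<forall>s\<in>{1..l}. gcol Y v s \<in> set (rs :: real list)"
    using label_list by blast
  show ?thesis
  proof (intro exI conjI allI impI)
    show "wf_tl l \<Omega> (PhiA l X vs0 rs m)" by (rule wf_PhiA)
    show "vars (PhiA l X vs0 rs m) \<subseteq> {1..Suc k}" using vars_PhiA[OF m] .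
    fix \<nu> assume \<nu>: "\<forall>i\<in>{1..m}. \<nu> i \<in> {1..n}"
    have r: "\<forall>i<m. \<forall>s\<in>{1..l}. gcol Y (\<nu> (Suc i)) s \<in> set rs" if "Y \<in> {G,H}" for Y
      using rs \<nu> that by auto
    show "eval n G \<nu> (PhiA l X vs0 rs m) = (if atp l G (map \<nu> [1..<Suc m]) = a then 1 else 0)"
      using eval_PhiA[OF G GX X(2) r] X(3) by simp
    show "eval n H \<nu> (PhiA l X vs0 rs m) = (if atp l H (map \<nu> [1..<Suc m]) = a then 1 else 0)"
      using eval_PhiA[OF H GX X(2) r] X(3) by simp
  qed
next
  case False
  show ?thesis
  proof (intro exI conjI allI impI)
    show "wf_tl l \<Omega> zero" by simp
    show "vars zero \<subseteq> {1..Suc k}" by simp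
    fix \<nu> :: "nat \<Rightarrow> nat"
    have "length (map \<nu> [1..<Suc m]) = m" by simp
    hence "atp l G (map \<nu> [1..<Suc m]) \<noteq> a" "atp l H (map \<nu> [1..<Suc m]) \<noteq> a" using False by blast+
    thus "eval n G \<nu> zero = (if atp l G (map \<nu> [1..<Suc m]) = a then 1 else 0)"
         "eval n H \<nu> zero = (if atp l H (map \<nu> [1..<Suc m]) = a then 1 else 0)" by simp_all
  qed
qed

definition el :: "nat \<Rightarrow> nat \<Rightarrow> graph \<Rightarrow> nat \<Rightarrow> nat list \<Rightarrow> nat \<Rightarrow> atype \<times> wlab list" where
  "el n l X t vs u = (atp l X (vs @ [u]), map (\<lambda>i. wl n l X t (vs[i := u])) [0..<length vs])"

definition Mm :: "nat \<Rightarrow> nat \<Rightarrow> graph \<Rightarrow> nat \<Rightarrow> nat list \<Rightarrow> (atype \<times> wlab list) multiset" where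
  "Mm n l X t vs = image_mset (el n l X t vs) (mset_set {1..n})"

lemma wl_Suc_Mm: "wl n l X (Suc t) vs = Refine (wl n l X t vs) (Mm n l X t vs)"
  by (simp add: Mm_def el_def[abs_def])

lemma sum_count:
  "(\<Sum>u\<in>{1..n}. (if el n l X t vs u = e then 1 else 0 :: real)) = real (count (Mm n l X t vs) e)"
proof -
  have "(\<Sum>u\<in>{1..n}. (if el n l X t vs u = e then 1 else 0 :: real))
     = sum_mset (image_mset (\<lambda>x. if x = e then 1 else 0 :: real) (image_mset (el n l X t vs) (mset_set {1..n})))"
    by (simp add: sum_unfold_sum_mset image_mset.compositionality comp_def)
  also have "\<dots> = real (count (Mm n l X t vs) e)" unfolding Mm_def by (simp add: sum_mset_delta)
  finally show ?thesis .
qed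

lemma size_Mm: "size (Mm n l X t vs) = n" by (simp add: Mm_def)

lemma map_upd_last: "map (\<nu>(Suc k := u)) [1..<Suc (Suc k)] = map \<nu> [1..<Suc k] @ [u]"
proof -
  have "[1..<Suc (Suc k)] = [1..<Suc k] @ [Suc k]" by simp
  moreover have "map (\<nu>(Suc k := u)) [1..<Suc k] = map \<nu> [1..<Suc k]"
    by (rule map_cong) (auto simp del: upt_Suc)
  ultimately show ?thesis by (simp del: upt_Suc)
qed

lemma map_upd_sw: "p < k \<Longrightarrow> map ((\<nu>(Suc k := u)) \<circ> sw (Suc p) (Suc k)) [1..<Suc k] = (map \<nu> [1..<Suc k])[p := u]"
  by (rule nth_equalityI) (auto simp: sw_def nth_list_update simp del: upt_Suc)



definition CFf :: "nat \<Rightarrow> tl \<Rightarrow> (nat \<Rightarrow> tl) \<Rightarrow> tl" where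
  "CFf k ia xc = Sum (Suc k) (Mul ia (prodtl (map (\<lambda>p. ren (sw (Suc p) (Suc k)) (xc p)) [0..<k])))"

lemma el_eq_iff:
  assumes "length vs = k" "length cs = k"
  shows "el n l Y t vs u = (a, cs) \<longleftrightarrow> atp l Y (vs @ [u]) = a \<and> (\<forall>p\<in>set [0..<k]. wl n l Y t (vs[p := u]) = cs ! p)"
proof -
  have c: "cs = map (\<lambda>p. cs ! p) [0..<k]" using assms(2) map_nth[of cs] by simp
  have "map (\<lambda>i. wl n l Y t (vs[i := u])) [0..<k] = cs \<longleftrightarrow> (\<forall>p\<in>set [0..<k]. wl n l Y t (vs[p := u]) = cs ! p)"
    by (subst c) (simp only: map_eq_conv)
  thus ?thesis unfolding el_def assms(1) by simp
qed

lemma eval_CF: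
  assumes IA: "\<forall>\<nu>. (\<forall>i\<in>{1..Suc k}. \<nu> i \<in> {1..n}) \<longrightarrow> eval n Y \<nu> ia = (if atp l Y (map \<nu> [1..<Suc (Suc k)]) = a then 1 else 0)"
    and XC: "\<forall>p<k. \<forall>\<nu>. (\<forall>i\<in>{1..k}. \<nu> i \<in> {1..n}) \<longrightarrow> eval n Y \<nu> (xc p) = (if wl n l Y t (map \<nu> [1..<Suc k]) = cs ! p then 1 else 0)"
    and cs: "length cs = k"
    and \<nu>: "\<forall>i\<in>{1..k}. \<nu> i \<in> {1..n}"
  shows "eval n Y \<nu> (CFf k ia xc) = real (count (Mm n l Y t (map \<nu> [1..<Suc k])) (a, cs))"
proof -
  let ?vs = "map \<nu> [1..<Suc k]"
  have tm: "eval n Y (\<nu>(Suc k := u)) (Mul ia (prodtl (map (\<lambda>p. ren (sw (Suc p) (Suc k)) (xc p)) [0..<k])))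
      = (if el n l Y t ?vs u = (a, cs) then 1 else 0)" if u: "u \<in> {1..n}" for u
  proof -
    let ?\<nu>' = "\<nu>(Suc k := u)"
    have r': "\<forall>i\<in>{1..Suc k}. ?\<nu>' i \<in> {1..n}" using \<nu> u by auto
    have e1: "eval n Y ?\<nu>' ia = (if atp l Y (?vs @ [u]) = a then 1 else 0)"
      using IA r' map_upd_last[of \<nu> k u] by simp
    have e2: "eval n Y ?\<nu>' (prodtl (map (\<lambda>p. ren (sw (Suc p) (Suc k)) (xc p)) [0..<k]))
        = (if \<forall>p\<in>set [0..<k]. wl n l Y t (?vs[p := u]) = cs ! p then 1 else 0)"
    proof (rule eval_prodtl_ind, intro ballI)
      fix p assume "p \<in> set [0..<k]"
      hence p: "p < k" by simp
      have rr: "\<forall>i\<in>{1..k}. (?\<nu>' \<circ> sw (Suc p) (Suc k)) i \<in> {1..n}"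
        using \<nu> u by (auto simp: sw_def)
      have "eval n Y ?\<nu>' (ren (sw (Suc p) (Suc k)) (xc p)) = eval n Y (?\<nu>' \<circ> sw (Suc p) (Suc k)) (xc p)"
        by (rule eval_ren[OF inj_sw])
      also have "\<dots> = (if wl n l Y t (map (?\<nu>' \<circ> sw (Suc p) (Suc k)) [1..<Suc k]) = cs ! p then 1 else 0)"
        using XC p rr by blast
      also have "\<dots> = (if wl n l Y t (?vs[p := u]) = cs ! p then 1 else 0)"
        using map_upd_sw[OF p, of \<nu> u] by simp
      finally show "eval n Y ?\<nu>' (ren (sw (Suc p) (Suc k)) (xc p)) = (if wl n l Y t (?vs[p := u]) = cs ! p then 1 else 0)" .
    qed
    show ?thesis using e1 e2 el_eq_iff[of ?vs k cs n l Y t u a] cs by simp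
  qed
  have "eval n Y \<nu> (CFf k ia xc) = (\<Sum>u\<in>{1..n}. eval n Y (\<nu>(Suc k := u)) (Mul ia (prodtl (map (\<lambda>p. ren (sw (Suc p) (Suc k)) (xc p)) [0..<k]))))"
    unfolding CFf_def by (simp only: eval.simps)
  also have "\<dots> = (\<Sum>u\<in>{1..n}. (if el n l Y t ?vs u = (a, cs) then 1 else 0))"
    by (rule sum.cong) (use tm in auto)
  also have "\<dots> = real (count (Mm n l Y t ?vs) (a, cs))" by (rule sum_count)
  finally show ?thesis .
qed

lemma vars_CF:
  assumes "vars ia \<subseteq> {1..Suc k}" "\<forall>p<k. vars (xc p) \<subseteq> {1..Suc k}"
  shows "vars (CFf k ia xc) \<subseteq> {1..Suc k}"
proof -
  have "vars (ren (sw (Suc p) (Suc k)) (xc p)) \<subseteq> {1..Suc k}" if "p < k" for p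
  proof -
    have "sw (Suc p) (Suc k) x \<in> {1..Suc k}" if "x \<in> {1..Suc k}" for x
      using that \<open>p < k\<close> by (simp add: sw_def)
    hence "sw (Suc p) (Suc k) ` vars (xc p) \<subseteq> {1..Suc k}" using assms(2) that by blast
    thus ?thesis by (simp only: vars_ren)
  qed
  hence "vars (prodtl (map (\<lambda>p. ren (sw (Suc p) (Suc k)) (xc p)) [0..<k])) \<subseteq> {1..Suc k}"
    using vars_prodtl[of "map (\<lambda>p. ren (sw (Suc p) (Suc k)) (xc p)) [0..<k]"] by force
  thus ?thesis using assms(1) unfolding CFf_def by (simp only: vars.simps) (intro insert_subsetI Un_least; simp)
qed

lemma wf_CF:
  assumes "wf_tl l \<Omega> ia" "\<forall>p<k. wf_tl l \<Omega> (xc p)"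
  shows "wf_tl l \<Omega> (CFf k ia xc)"
  using assms unfolding CFf_def by (auto intro!: wf_prodtl simp: wf_ren)



definition Ind :: "nat \<Rightarrow> nat \<Rightarrow> nat \<Rightarrow> (nat \<times> (real list \<Rightarrow> real)) set \<Rightarrow> graph \<Rightarrow> graph \<Rightarrow> nat \<Rightarrow> wlab \<Rightarrow> tl \<Rightarrow> bool" where
  "Ind n l k \<Omega> G H t c \<chi> \<longleftrightarrow> wf_tl l \<Omega> \<chi> \<and> vars \<chi> \<subseteq> {1..Suc k} \<and>
    (\<forall>Y\<in>{G,H}. \<forall>\<nu>. (\<forall>i\<in>{1..k}. \<nu> i \<in> {1..n}) \<longrightarrow>
       eval n Y \<nu> \<chi> = (if wl n l Y t (map \<nu> [1..<Suc k]) = c then 1 else 0))"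

lemma IndA':
  assumes G: "is_graph n l G" and H: "is_graph n l H" and m: "m \<le> Suc k"
  shows "\<exists>\<phi>. wf_tl l \<Omega> \<phi> \<and> vars \<phi> \<subseteq> {1..Suc k} \<and>
    (\<forall>Y\<in>{G,H}. \<forall>\<nu>. (\<forall>i\<in>{1..m}. \<nu> i \<in> {1..n}) \<longrightarrow>
       eval n Y \<nu> \<phi> = (if atp l Y (map \<nu> [1..<Suc m]) = a then 1 else 0))"
  using IndA[OF G H m, of \<Omega> a] by auto

lemma zero_Ind:
  assumes "\<And>Y \<nu>. Y \<in> {G,H} \<Longrightarrow> \<forall>i\<in>{1..k}. \<nu> i \<in> {1..n} \<Longrightarrow> wl n l Y t (map \<nu> [1..<Suc k]) \<noteq> c"
    and "k \<ge> 1"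
  shows "Ind n l k \<Omega> G H t c zero"
  using assms unfolding Ind_def by auto

lemma Sind:
  assumes G: "is_graph n l G" and H: "is_graph n l H" and k: "k \<ge> 1"
  shows "\<exists>\<chi>. Ind n l k \<Omega> G H t c \<chi>"
proof (induction t arbitrary: c)
  case 0
  show ?case
  proof (cases c)
    case (Atp a)
    obtain \<phi> where \<phi>: "wf_tl l \<Omega> \<phi>" "vars \<phi> \<subseteq> {1..Suc k}"
      "\<forall>Y\<in>{G,H}. \<forall>\<nu>. (\<forall>i\<in>{1..k}. \<nu> i \<in> {1..n}) \<longrightarrow>
       eval n Y \<nu> \<phi> = (if atp l Y (map \<nu> [1..<Suc k]) = a then 1 else 0)"
      using IndA'[OF G H, of k k \<Omega> a] by auto
    have "Ind n l k \<Omega> G H 0 c \<phi>" unfolding Ind_def using \<phi> Atp by simp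
    thus ?thesis by blast
  next
    case (Refine c0 M0)
    have "Ind n l k \<Omega> G H 0 c zero" by (rule zero_Ind) (use Refine k in auto)
    thus ?thesis by blast
  qed
next
  case (Suc t)
  from Suc.IH have "\<forall>c. \<exists>\<chi>. Ind n l k \<Omega> G H t c \<chi>" by blast
  then obtain X where X: "\<And>c. Ind n l k \<Omega> G H t c (X c)" by metis
  have "\<forall>a. \<exists>\<phi>. wf_tl l \<Omega> \<phi> \<and> vars \<phi> \<subseteq> {1..Suc k} \<and>
    (\<forall>Y\<in>{G,H}. \<forall>\<nu>. (\<forall>i\<in>{1..Suc k}. \<nu> i \<in> {1..n}) \<longrightarrow>
       eval n Y \<nu> \<phi> = (if atp l Y (map \<nu> [1..<Suc (Suc k)]) = a then 1 else 0))"
    using IndA'[OF G H, of "Suc k" k \<Omega>] by blast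
  then obtain IA where IA: "\<And>a. wf_tl l \<Omega> (IA a) \<and> vars (IA a) \<subseteq> {1..Suc k} \<and>
    (\<forall>Y\<in>{G,H}. \<forall>\<nu>. (\<forall>i\<in>{1..Suc k}. \<nu> i \<in> {1..n}) \<longrightarrow>
       eval n Y \<nu> (IA a) = (if atp l Y (map \<nu> [1..<Suc (Suc k)]) = a then 1 else 0))" by metis
  show ?case
  proof (cases c)
    case (Atp a)
    have "Ind n l k \<Omega> G H (Suc t) c zero" by (rule zero_Ind) (use Atp k in auto)
    thus ?thesis by blast
  next
    case (Refine c0 M0)
    define Ts where "Ts = {vs. set vs \<subseteq> {1..n} \<and> length vs = k}"
    have finTs: "finite Ts" unfolding Ts_def by (rule finite_lists_length_eq) simp
    define E where "E = (\<Union>vs\<in>Ts. set_mset (Mm n l G t vs)) \<union> (\<Union>vs\<in>Ts. set_mset (Mm n l H t vs))"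
    have finE: "finite E" unfolding E_def using finTs by auto
    have inTs: "map \<nu> [1..<Suc k] \<in> Ts" if "\<forall>i\<in>{1..k}. \<nu> i \<in> {1..n}" for \<nu>
      using that unfolding Ts_def by auto
    have MmE: "set_mset (Mm n l Y t (map \<nu> [1..<Suc k])) \<subseteq> E" if "Y \<in> {G,H}" "\<forall>i\<in>{1..k}. \<nu> i \<in> {1..n}" for Y \<nu>
      using that inTs[OF that(2)] unfolding E_def by blast
    have Elen: "length (snd e) = k" if "e \<in> E" for e
    proof -
      from that obtain Y vs where "vs \<in> Ts" "e \<in># Mm n l Y t vs" unfolding E_def by blast
      then obtain u where "e = el n l Y t vs u" "vs \<in> Ts" unfolding Mm_def by auto
      thus ?thesis unfolding el_def Ts_def by simp
    qed
    show ?thesis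
    proof (cases "set_mset M0 \<subseteq> E")
      case False
      have "Ind n l k \<Omega> G H (Suc t) c zero"
      proof (rule zero_Ind[OF _ k])
        fix Y \<nu> assume Y: "Y \<in> {G,H}" and \<nu>: "\<forall>i\<in>{1..k}. \<nu> i \<in> {1..n}"
        show "wl n l Y (Suc t) (map \<nu> [1..<Suc k]) \<noteq> c"
        proof -
          have "Mm n l Y t (map \<nu> [1..<Suc k]) \<noteq> M0" using MmE[OF Y \<nu>] False by auto
          thus ?thesis unfolding wl_Suc_Mm Refine by simp
        qed
      qed
      thus ?thesis by blast
    next
      case True
      obtain es where es: "set es = E" using finite_list[OF finE] by (elim exE)
      define rsN where "rsN = map real [0..<Suc n]"
      define CF where "CF e = CFf k (IA (fst e)) (\<lambda>p. X (snd e ! p))" for e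
      define IndM where "IndM = prodtl (map (\<lambda>e. lagf rsN (real (count M0 e)) (CF e)) es)"
      define \<chi> where "\<chi> = Mul (X c0) IndM"
      have evCF: "eval n Y \<nu> (CF e) = real (count (Mm n l Y t (map \<nu> [1..<Suc k])) e)"
        if Y: "Y \<in> {G,H}" and \<nu>: "\<forall>i\<in>{1..k}. \<nu> i \<in> {1..n}" and e: "e \<in> E" for Y \<nu> e
      proof -
        obtain a cs where acs: "e = (a, cs)" by (cases e)
        have cs: "length cs = k" using Elen[OF e] acs by simp
        have "eval n Y \<nu> (CFf k (IA a) (\<lambda>p. X (cs ! p))) = real (count (Mm n l Y t (map \<nu> [1..<Suc k])) (a, cs))"
        proof (rule eval_CF[OF _ _ cs \<nu>])
          show "\<forall>\<nu>. (\<forall>i\<in>{1..Suc k}. \<nu> i \<in> {1..n}) \<longrightarrow> eval n Y \<nu> (IA a) = (if atp l Y (map \<nu> [1..<Suc (Suc k)]) = a then 1 else 0)"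
            using IA[of a] Y by blast
          show "\<forall>p<k. \<forall>\<nu>. (\<forall>i\<in>{1..k}. \<nu> i \<in> {1..n}) \<longrightarrow> eval n Y \<nu> (X (cs ! p)) = (if wl n l Y t (map \<nu> [1..<Suc k]) = cs ! p then 1 else 0)"
            using X Y unfolding Ind_def by blast
        qed
        thus ?thesis unfolding CF_def acs by simp
      qed
      have evM: "eval n Y \<nu> IndM = (if Mm n l Y t (map \<nu> [1..<Suc k]) = M0 then 1 else 0)"
        if Y: "Y \<in> {G,H}" and \<nu>: "\<forall>i\<in>{1..k}. \<nu> i \<in> {1..n}" for Y \<nu>
      proof -
        let ?M = "Mm n l Y t (map \<nu> [1..<Suc k])"
        have "eval n Y \<nu> IndM = (if \<forall>e\<in>set es. real (count ?M e) = real (count M0 e) then 1 else 0)"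
          unfolding IndM_def
        proof (rule eval_prodtl_ind, intro ballI)
          fix e assume e: "e \<in> set es"
          have eE: "e \<in> E" using e es by simp
          have "count ?M e \<le> n" using count_le_size[of ?M e] size_Mm by simp
          hence "eval n Y \<nu> (CF e) \<in> set rsN" unfolding evCF[OF Y \<nu> eE] rsN_def by auto
          thus "eval n Y \<nu> (lagf rsN (real (count M0 e)) (CF e)) = (if real (count ?M e) = real (count M0 e) then 1 else 0)"
            using eval_lagf evCF[OF Y \<nu> eE] by simp
        qed
        moreover have "(\<forall>e\<in>set es. real (count ?M e) = real (count M0 e)) \<longleftrightarrow> ?M = M0"
        proof
          assume a: "\<forall>e\<in>set es. real (count ?M e) = real (count M0 e)"
          show "?M = M0"
          proof (rule multiset_eqI)
            fix e show "count ?M e = count M0 e"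
            proof (cases "e \<in> E")
              case True thus ?thesis using a es by simp
            next
              case False
              hence "e \<notin># ?M" "e \<notin># M0" using MmE[OF Y \<nu>] \<open>set_mset M0 \<subseteq> E\<close> by auto
              thus ?thesis by (simp add: not_in_iff)
            qed
          qed
        qed simp
        ultimately show ?thesis by simp
      qed
      have "Ind n l k \<Omega> G H (Suc t) c \<chi>"
        unfolding Ind_def
      proof (intro conjI ballI allI impI)
        have wfX: "wf_tl l \<Omega> (X c')" for c' using X unfolding Ind_def by blast
        have vX: "vars (X c') \<subseteq> {1..Suc k}" for c' using X unfolding Ind_def by blast
        have wfCF: "wf_tl l \<Omega> (CF e)" for e unfolding CF_def by (rule wf_CF) (use IA wfX in auto)
        have vCF: "vars (CF e) \<subseteq> {1..Suc k}" for e unfolding CF_def by (rule vars_CF) (use IA vX in auto)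
        show "wf_tl l \<Omega> \<chi>" unfolding \<chi>_def IndM_def using wfX wfCF by (auto intro!: wf_prodtl wf_lagf)
        have "vars (lagf rsN (real (count M0 e)) (CF e)) \<subseteq> {1..Suc k}" for e
          using vars_lagf[of rsN "real (count M0 e)" "CF e"] vCF[of e] by auto
        hence "vars IndM \<subseteq> {1..Suc k}" unfolding IndM_def
          using vars_prodtl[of "map (\<lambda>e. lagf rsN (real (count M0 e)) (CF e)) es"] by force
        thus "vars \<chi> \<subseteq> {1..Suc k}" unfolding \<chi>_def using vX[of c0] by simp
        fix Y \<nu> assume Y: "Y \<in> {G,H}" and \<nu>: "\<forall>i\<in>{1..k}. \<nu> i \<in> {1..n}"
        have ex: "eval n Y \<nu> (X c0) = (if wl n l Y t (map \<nu> [1..<Suc k]) = c0 then 1 else 0)"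
          using X[of c0] Y \<nu> unfolding Ind_def by blast
        have iff: "wl n l Y (Suc t) (map \<nu> [1..<Suc k]) = c \<longleftrightarrow>
            wl n l Y t (map \<nu> [1..<Suc k]) = c0 \<and> Mm n l Y t (map \<nu> [1..<Suc k]) = M0"
          unfolding wl_Suc_Mm Refine by (simp only: wlab.inject)
        show "eval n Y \<nu> \<chi> = (if wl n l Y (Suc t) (map \<nu> [1..<Suc k]) = c then 1 else 0)"
          unfolding \<chi>_def eval.simps(5) ex evM[OF Y \<nu>] iff by simp
      qed
      thus ?thesis by blast
    qed
  qed
qed



definition clo :: "nat list \<Rightarrow> tl \<Rightarrow> tl" where
  "clo js \<phi> = foldr (\<lambda>j \<psi>. Sum j (Mul (EqI 1 j) \<psi>)) js \<phi>"

lemma free_vars: "free \<phi> \<subseteq> vars \<phi>"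
  by (induction \<phi>) auto

lemma clo_props:
  assumes "\<forall>j\<in>set js. j \<noteq> 1"
  shows "free (clo js \<phi>) \<subseteq> insert 1 (free \<phi> - set js)"
    "vars (clo js \<phi>) \<subseteq> insert 1 (set js \<union> vars \<phi>)"
    "wf_tl l \<Omega> \<phi> \<Longrightarrow> wf_tl l \<Omega> (clo js \<phi>)"
    "v \<in> {1..n} \<Longrightarrow> eval n Y (\<lambda>_. v) (clo js \<phi>) = eval n Y (\<lambda>_. v) \<phi>"
  using assms
proof (induction js)
  case Nil
  { case 1 thus ?case by (auto simp: clo_def) }
  { case 2 thus ?case by (auto simp: clo_def) }
  { case 3 thus ?case by (auto simp: clo_def) }
  { case 4 thus ?case by (auto simp: clo_def) }
next
  case (Cons j js)
  have c: "clo (j # js) \<phi> = Sum j (Mul (EqI 1 j) (clo js \<phi>))" by (simp add: clo_def)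
  { case 1 thus ?case using Cons.IH(1) unfolding c by auto }
  { case 2 thus ?case using Cons.IH(2) unfolding c by auto }
  { case 3 thus ?case using Cons.IH(3) unfolding c by auto }
  { case 4
    have j: "j \<noteq> 1" using 4 by simp
    have "eval n Y (\<lambda>_. v) (clo (j # js) \<phi>) = (\<Sum>u\<in>{1..n}. (if v = u then 1 else 0) * eval n Y ((\<lambda>_. v)(j := u)) (clo js \<phi>))"
      unfolding c using j by simp
    also have "\<dots> = (\<Sum>u\<in>{1..n}. (if u = v then eval n Y ((\<lambda>_. v)(j := u)) (clo js \<phi>) else 0))"
      by (rule sum.cong) auto
    also have "\<dots> = eval n Y ((\<lambda>_. v)(j := v)) (clo js \<phi>)" using 4 by (simp add: sum.delta)
    also have "(\<lambda>_. v)(j := v) = (\<lambda>_::nat. v)" by (rule ext) simp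
    also have "eval n Y (\<lambda>_. v) (clo js \<phi>) = eval n Y (\<lambda>_. v) \<phi>" using Cons.IH(4) 4 by simp
    finally show ?case .
  }
qed

lemma dir2:
  assumes k: "k \<ge> 1" and in1: "((G,v),(H,w)) \<in> rho1_TL n l (TL l \<Omega> (k+1))"
  shows "((G,v),(H,w)) \<in> rho1_vwl_inf n l k"
proof -
  have G: "is_graph n l G" and H: "is_graph n l H" and v: "v \<in> {1..n}" and w: "w \<in> {1..n}"
    and eq: "\<And>\<phi>. \<phi> \<in> TL l \<Omega> (k+1) \<Longrightarrow> free \<phi> \<subseteq> {1} \<Longrightarrow> eval n G (\<lambda>_. v) \<phi> = eval n H (\<lambda>_. w) \<phi>"
    using in1 unfolding rho1_TL_def by auto
  have "wl n l G t (replicate k v) = wl n l H t (replicate k w)" for t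
  proof (rule ccontr)
    assume ne: "wl n l G t (replicate k v) \<noteq> wl n l H t (replicate k w)"
    obtain \<chi> where \<chi>: "Ind n l k \<Omega> G H t (wl n l G t (replicate k v)) \<chi>" using Sind[OF G H k] by blast
    have mv: "map (\<lambda>_. v) [1..<Suc k] = replicate k v" "map (\<lambda>_. w) [1..<Suc k] = replicate k w"
      by (simp_all add: map_replicate_const del: upt_Suc)
    have eG: "eval n G (\<lambda>_. v) \<chi> = 1" using \<chi> v mv unfolding Ind_def by auto
    have eH: "eval n H (\<lambda>_. w) \<chi> = 0" using \<chi> w mv ne unfolding Ind_def by auto
    define \<phi> where "\<phi> = clo [2..<Suc (Suc k)] \<chi>"
    have nj: "\<forall>j\<in>set [2..<Suc (Suc k)]. j \<noteq> 1" by (simp del: upt_Suc)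
    have vx: "vars \<chi> \<subseteq> {1..Suc k}" "wf_tl l \<Omega> \<chi>" using \<chi> unfolding Ind_def by auto
    have "vars \<phi> \<subseteq> {1..Suc k}" using clo_props(2)[OF nj, of \<chi>] vx unfolding \<phi>_def by (auto simp del: upt_Suc)
    moreover have "wf_tl l \<Omega> \<phi>" using clo_props(3)[OF nj vx(2)] unfolding \<phi>_def .
    ultimately have inTL: "\<phi> \<in> TL l \<Omega> (k+1)" unfolding TL_def by simp
    have "free \<phi> \<subseteq> insert 1 (free \<chi> - set [2..<Suc (Suc k)])" using clo_props(1)[OF nj] unfolding \<phi>_def .
    moreover have "free \<chi> \<subseteq> {1..Suc k}" using free_vars vx(1) by blast
    hence "insert 1 (free \<chi> - set [2..<Suc (Suc k)]) \<subseteq> {1}"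
    proof (intro subsetI)
      fix x assume "free \<chi> \<subseteq> {1..Suc k}" "x \<in> insert 1 (free \<chi> - set [2..<Suc (Suc k)])"
      hence "x = 1 \<or> (x \<in> {1..Suc k} \<and> x \<notin> {2..<Suc (Suc k)})" by (auto simp del: upt_Suc)
      thus "x \<in> {1}" by auto
    qed
    ultimately have fr: "free \<phi> \<subseteq> {1}" by blast
    have "eval n G (\<lambda>_. v) \<phi> = 1" using clo_props(4)[OF nj v] eG unfolding \<phi>_def by simp
    moreover have "eval n H (\<lambda>_. w) \<phi> = 0" using clo_props(4)[OF nj w] eH unfolding \<phi>_def by simp
    ultimately show False using eq[OF inTL fr] by simp
  qed
  thus ?thesis unfolding rho1_vwl_inf_def vwl_def using G H v w by auto
qed

theorem theorem1:
  fixes n l k :: nat and \<Omega> :: "(nat \<times> (real list \<Rightarrow> real)) set"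
  assumes "n \<ge> 1" and "l \<ge> 1" and "k \<ge> 1"
    and "\<forall>f\<in>\<Omega>. fst f \<ge> 1"
  shows "rho1_vwl_inf n l k = rho1_TL n l (TL l \<Omega> (k + 1))"
proof (intro set_eqI iffI)
  fix p assume "p \<in> rho1_vwl_inf n l k"
  moreover obtain G v H w where "p = ((G,v),(H,w))" by (metis prod.collapse)
  ultimately show "p \<in> rho1_TL n l (TL l \<Omega> (k + 1))" using dir1[OF assms(3)] by simp
next
  fix p assume "p \<in> rho1_TL n l (TL l \<Omega> (k + 1))"
  moreover obtain G v H w where "p = ((G,v),(H,w))" by (metis prod.collapse)
  ultimately show "p \<in> rho1_vwl_inf n l k" using dir2[OF assms(3)] by simp
qed


end
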